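(* Let $q$ be a prime power with $q\equiv 1\pmod 3$. The connected components of $C_A(q)$ are as follows: (a) there are exactly $q-1$ isolated vertices, namely the $\pi\in AGL(1,q)$ with $\pi(F)=F$ (and a vertex is isolated iff $\pi(F)=F$); (b) if $q$ is odd, every component that is not an isolated vertex is a cycle of length $6$; (c) if $q$ is even, every component that is not an isolated vertex is a cycle of length $3$.
   Context: $AGL(1,q)=\{x\mapsto ax+b: a\in GF(q)\setminus\{0\}, b\in GF(q)\}$, acting on $GF(q)$. For permutations $\pi,\sigma$ of a finite set, $hd(\pi,\sigma)$ is the number of points at which they differ. Fix a distinguished element $F\in GF(q)$. For a permutation $\pi$ of $GF(q)$, $\pi^{\triangle}$ is the permutation with $\pi^{\triangle}(\pi^{-1}(F))=\pi(F)$, $\pi^{\triangle}(F)=F$, and $\pi^{\triangle}(x)=\pi(x)$ otherwise. The contraction graph $C_A(q)$ has vertex set $AGL(1,q)$, with distinct $\pi,\sigma$ adjacent iff $hd(\pi^{\triangle},\sigma^{\triangle})=q-4$. *)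

theory Defs
  imports Main "HOL-Library.Cardinality"
begin

text \<open>GF(q) is modelled by an arbitrary finite field type 'a, with q = CARD('a).
  Permutations of GF(q) are functions 'a => 'a.\<close>

definition AGL :: "('a::{finite,field} \<Rightarrow> 'a) set" where
  "AGL = {(\<lambda>x. a * x + b) | a b. a \<noteq> 0}"

definition hd_dist :: "('a::finite \<Rightarrow> 'b) \<Rightarrow> ('a \<Rightarrow> 'b) \<Rightarrow> nat" where
  "hd_dist p s = card {x. p x \<noteq> s x}"

definition contr :: "'a \<Rightarrow> ('a \<Rightarrow> 'a) \<Rightarrow> ('a \<Rightarrow> 'a)" where
  "contr F p = (\<lambda>x. if x = F then F else if x = inv p F then p F else p x)"

definition CA_adj :: "'a::{finite,field} \<Rightarrow> ('a \<Rightarrow> 'a) \<Rightarrow> ('a \<Rightarrow> 'a) \<Rightarrow> bool" where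
  "CA_adj F p s \<longleftrightarrow> p \<in> AGL \<and> s \<in> AGL \<and> p \<noteq> s \<and>
      hd_dist (contr F p) (contr F s) = CARD('a) - 4"

definition isolated :: "('v \<Rightarrow> 'v \<Rightarrow> bool) \<Rightarrow> 'v \<Rightarrow> bool" where
  "isolated E v \<longleftrightarrow> (\<nexists>w. E v w)"

definition component :: "'v set \<Rightarrow> ('v \<Rightarrow> 'v \<Rightarrow> bool) \<Rightarrow> 'v \<Rightarrow> 'v set" where
  "component V E v = {w \<in> V. (\<lambda>x y. x \<in> V \<and> y \<in> V \<and> E x y)\<^sup>*\<^sup>* v w}"

definition is_cycle :: "('v \<Rightarrow> 'v \<Rightarrow> bool) \<Rightarrow> 'v set \<Rightarrow> nat \<Rightarrow> bool" where
  "is_cycle E C k \<longleftrightarrow> 3 \<le> k \<and> (\<exists>vs. distinct vs \<and> length vs = k \<and> set vs = C \<and>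
     (\<forall>u\<in>C. \<forall>w\<in>C. E u w \<longleftrightarrow>
        (\<exists>i<k. (u = vs ! i \<and> w = vs ! ((i + 1) mod k)) \<or> (w = vs ! i \<and> u = vs ! ((i + 1) mod k)))))"

end

theory Submission
  imports Defs "HOL-Algebra.Sylow" "HOL-Algebra.Multiplicative_Group"
begin


lemma cauchy_prime:
  assumes "group G" "finite (carrier G)" "prime p" "p dvd order G"
  shows "\<exists>x\<in>carrier G. x \<noteq> \<one>\<^bsub>G\<^esub> \<and> x [^]\<^bsub>G\<^esub> p = \<one>\<^bsub>G\<^esub>"
proof -
  obtain m where m: "order G = p^1 * m" using assms(4) by auto
  obtain H where H: "subgroup H G" "card H = p"
    using sylow_thm[OF assms(3) assms(1) m assms(2)] by auto
  have "card H \<ge> 2" using H(2) assms(3) prime_ge_2_nat by auto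
  have "H - {\<one>\<^bsub>G\<^esub>} \<noteq> {}"
  proof
    assume "H - {\<one>\<^bsub>G\<^esub>} = {}"
    then have "H \<subseteq> {\<one>\<^bsub>G\<^esub>}" by blast
    then have "card H \<le> card {\<one>\<^bsub>G\<^esub>}" by (intro card_mono) auto
    then show False using \<open>card H \<ge> 2\<close> by simp
  qed
  then obtain x where x: "x \<in> H" "x \<noteq> \<one>\<^bsub>G\<^esub>" by auto
  have g: "group (G\<lparr>carrier := H\<rparr>)" using subgroup.subgroup_is_group[OF H(1) assms(1)] .
  have "x [^]\<^bsub>G\<lparr>carrier := H\<rparr>\<^esub> order (G\<lparr>carrier := H\<rparr>) = \<one>\<^bsub>G\<lparr>carrier := H\<rparr>\<^esub>"
    by (rule group.pow_order_eq_1[OF g]) (simp add: x)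
  moreover have "order (G\<lparr>carrier := H\<rparr>) = p" using H(2) by (simp add: order_def)
  moreover have "\<And>n. x [^]\<^bsub>G\<lparr>carrier := H\<rparr>\<^esub> (n::nat) = x [^]\<^bsub>G\<^esub> n"
    by (simp add: nat_pow_def)
  ultimately show ?thesis using x H(1) subgroup.mem_carrier by fastforce
qed

definition multG :: "('a::field) monoid" where
  "multG = \<lparr>carrier = UNIV - {0}, monoid.mult = (*), one = 1\<rparr>"

definition addG :: "('a::field) monoid" where
  "addG = \<lparr>carrier = UNIV, monoid.mult = (+), one = 0\<rparr>"

lemma multG_group: "group (multG :: ('a::field) monoid)"
  unfolding multG_def
  by (rule groupI) (auto simp: mult.assoc intro!: bexI[where x="inverse _"])

lemma addG_group: "group (addG :: ('a::field) monoid)"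
  unfolding addG_def
  by (rule groupI) (auto simp: add.assoc intro!: exI[where x="- _"])

lemma multG_pow: "x [^]\<^bsub>multG\<^esub> (n::nat) = (x::'a::field) ^ n"
  by (induction n) (auto simp: multG_def)

lemma addG_pow: "x [^]\<^bsub>addG\<^esub> (n::nat) = of_nat n * (x::'a::field)"
  by (induction n) (auto simp: addG_def algebra_simps)

lemma exists_omega:
  assumes "CARD('a::{finite,field}) mod 3 = 1"
  shows "\<exists>w::'a. w^2 + w + 1 = 0 \<and> w \<noteq> 1"
proof -
  have "order (multG::'a monoid) = CARD('a) - 1"
    by (simp add: order_def multG_def card_Diff_singleton)
  then have "3 dvd order (multG::'a monoid)" using assms by presburger
  then have "\<exists>x\<in>carrier (multG::'a monoid). x \<noteq> \<one>\<^bsub>multG\<^esub> \<and> x[^]\<^bsub>multG\<^esub> (3::nat) = \<one>\<^bsub>multG\<^esub>"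
    by (intro cauchy_prime[OF multG_group]) (auto simp: multG_def)
  then obtain x where x: "x \<in> carrier (multG::'a monoid)" "x \<noteq> 1" "x^3 = 1"
    by (auto simp: multG_pow) (auto simp: multG_def)
  have "(x - 1) * (x^2 + x + 1) = 0" using x(3) by (simp add: algebra_simps power3_eq_cube power2_eq_square)
  then show ?thesis using x(2) by auto
qed

lemma even_char2:
  assumes "even CARD('a::{finite,field})"
  shows "(2::'a) = 0"
proof -
  have "2 dvd order (addG::'a monoid)" using assms by (simp add: order_def addG_def)
  then have "\<exists>x\<in>carrier (addG::'a monoid). x \<noteq> \<one>\<^bsub>addG\<^esub> \<and> x[^]\<^bsub>addG\<^esub> (2::nat) = \<one>\<^bsub>addG\<^esub>"
    by (intro cauchy_prime[OF addG_group]) (auto simp: addG_def)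
  then obtain x where x: "x \<noteq> (0::'a)" "2 * x = 0"
    by (auto simp: addG_pow) (auto simp: addG_def)
  then show ?thesis by auto
qed

lemma odd_char:
  assumes "odd CARD('a::{finite,field})"
  shows "(2::'a) \<noteq> 0"
proof
  assume h: "(2::'a) = 0"
  interpret group "addG::'a monoid" by (rule addG_group)
  have one1: "(1::'a) + 1 = 0" using h by (metis one_add_one)
  have "subgroup {0,1::'a} addG"
  proof (rule subgroupI)
    fix a assume a: "a \<in> {0,1::'a}"
    have "inv\<^bsub>addG\<^esub> a = a"
      by (rule inv_equality) (use a one1 in \<open>auto simp: addG_def\<close>)
    then show "inv\<^bsub>addG\<^esub> a \<in> {0,1}" using a by simp
  qed (use one1 in \<open>auto simp: addG_def\<close>)
  from lagrange[OF this] have "card {0,1::'a} dvd order (addG::'a monoid)"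
    by (metis dvd_triv_right)
  then have "card {0,1::'a} dvd CARD('a)" by (simp add: order_def addG_def)
  moreover have "card {0,1::'a} = 2" by simp
  ultimately have "(2::nat) dvd CARD('a)" by metis
  then show False using assms by blast
qed



definition Mf :: "'a::field \<Rightarrow> 'a \<Rightarrow> 'a \<Rightarrow> 'a \<Rightarrow> 'a" where
  "Mf F a b = (\<lambda>x. a*(x-F)+F+b)"

lemma AGL_Mf: "(AGL :: ('a::{finite,field} \<Rightarrow> 'a) set) = {Mf F a b | a b. a \<noteq> 0}"
proof (intro Set.set_eqI iffI)
  fix p :: "'a \<Rightarrow> 'a" assume "p \<in> AGL"
  then obtain a b where p: "p = (\<lambda>x. a*x+b)" "a \<noteq> 0" unfolding AGL_def by auto
  have "p = Mf F a (a*F+b-F)" unfolding p Mf_def by (auto simp: algebra_simps)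
  then show "p \<in> {Mf F a b | a b. a \<noteq> 0}" using p(2) by auto
next
  fix p :: "'a \<Rightarrow> 'a" assume "p \<in> {Mf F a b | a b. a \<noteq> 0}"
  then obtain a b where p: "p = Mf F a b" "a \<noteq> 0" by auto
  have "p = (\<lambda>x. a*x + (b+F-a*F))" unfolding p Mf_def by (auto simp: algebra_simps)
  then show "p \<in> AGL" using p(2) unfolding AGL_def by auto
qed

lemma Mf_in_AGL: "(a::'a::{finite,field}) \<noteq> 0 \<Longrightarrow> Mf F a b \<in> AGL"
  using AGL_Mf by blast

lemma Mf_eq: "Mf F a b = Mf F c d \<longleftrightarrow> a = c \<and> b = d"
proof
  assume h: "Mf F a b = Mf F c d"
  from fun_cong[OF h, of F] have "b = d" by (simp add: Mf_def)
  moreover from fun_cong[OF h, of "F+1"] have "a + F + b = c + F + d" by (simp add: Mf_def)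
  ultimately show "a = c \<and> b = d" by simp
qed simp

lemma inv_Mf: assumes "(a::'a::field) \<noteq> 0" shows "Hilbert_Choice.inv (Mf F a b) F = F - b/a"
proof (rule inv_f_eq)
  show "inj (Mf F a b)" by (rule injI) (use assms in \<open>simp add: Mf_def\<close>)
  show "Mf F a b (F - b/a) = F" using assms by (simp add: Mf_def)
qed

lemma contr_Mf: assumes "(a::'a::field) \<noteq> 0"
  shows "contr F (Mf F a b) = (\<lambda>x. if x = F then F else if x = F - b/a then F + b else a*(x-F)+F+b)"
  unfolding contr_def inv_Mf[OF assms] unfolding Mf_def by (rule ext) (simp only: diff_self mult_zero_right add_0)

definition Ag :: "'a::{finite,field} \<Rightarrow> 'a \<Rightarrow> 'a \<Rightarrow> 'a \<Rightarrow> 'a \<Rightarrow> 'a set" where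
  "Ag F a b c d = {x. contr F (Mf F a b) x = contr F (Mf F c d) x}"

lemma fwd:
  fixes F a b c d :: "'a::{finite,field}"
  assumes a: "a \<noteq> 0" and c: "c \<noteq> 0" and ne: "Mf F a b \<noteq> Mf F c d" and card4: "card (Ag F a b c d) = 4"
  shows "b \<noteq> 0 \<and> (c/a)^2 + c/a + 1 = 0 \<and> d = b*(1 + c/a)"
proof -
  define wp where "wp = F - b/a"
  define ws where "ws = F - d/c"
  define S where "S = {F, wp, ws}"
  define D where "D = {x. Mf F a b x = Mf F c d x} - S"
  have cp: "contr F (Mf F a b) = (\<lambda>x. if x = F then F else if x = wp then F + b else a*(x-F)+F+b)"
    unfolding wp_def by (rule contr_Mf[OF a])
  have cs: "contr F (Mf F c d) = (\<lambda>x. if x = F then F else if x = ws then F + d else c*(x-F)+F+d)"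
    unfolding ws_def by (rule contr_Mf[OF c])
  have D1: "card D \<le> 1"
  proof -
    have "\<forall>x\<in>D. \<forall>y\<in>D. x = y"
    proof (intro ballI)
      fix x y assume "x \<in> D" "y \<in> D"
      then have hx: "a*(x-F)+F+b = c*(x-F)+F+d" and hy: "a*(y-F)+F+b = c*(y-F)+F+d"
        by (auto simp: D_def Mf_def)
      show "x = y"
      proof (cases "a = c")
        case True
        then have "b = d" using hx by simp
        then show ?thesis using ne True by simp
      next
        case False
        from hx hy have "(a - c) * (x - y) = 0" by Groebner_Basis.algebra
        then show ?thesis using False by simp
      qed
    qed
    then show ?thesis using card_le_Suc0_iff_eq[of D] by simp
  qed
  have S3: "card S \<le> 3" unfolding S_def by (simp add: card_insert_if)
  have sub: "Ag F a b c d \<subseteq> S \<union> D"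
    unfolding Ag_def D_def S_def cp cs by (auto simp: Mf_def)
  have "card (S \<union> D) \<le> card S + card D" by (rule card_Un_le)
  moreover have "card (Ag F a b c d) \<le> card (S \<union> D)" by (rule card_mono[OF _ sub]) simp
  ultimately have cS: "card S = 3" and cSD: "card (S \<union> D) = card (Ag F a b c d)"
    using card4 D1 S3 by linarith+
  have eq: "Ag F a b c d = S \<union> D" by (rule card_subset_eq[OF _ sub cSD[symmetric]]) simp
  have dist: "F \<noteq> wp" "F \<noteq> ws" "wp \<noteq> ws"
    using cS unfolding S_def by (auto simp: card_insert_if split: if_splits)
  have inwp: "wp \<in> Ag F a b c d" and inws: "ws \<in> Ag F a b c d" using eq S_def by auto
  have b0: "b \<noteq> 0" using dist(1) wp_def by auto
  have d0: "d \<noteq> 0" using dist(2) ws_def by auto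
  have e1: "F + b = c*(wp-F)+F+d" using inwp dist unfolding Ag_def cp cs by auto
  have e2: "a*(ws-F)+F+b = F + d" using inws dist unfolding Ag_def cp cs by auto
  define r where "r = c/a"
  have cr: "c = a*r" using a r_def by simp
  have r0: "r \<noteq> 0" using c cr by auto
  have dr: "d = b*(1+r)" using e1 a unfolding wp_def cr by (simp add: field_simps)
  have "a*(-(d/c)) + b = d" using e2 unfolding ws_def by (simp add: algebra_simps)
  then have "-(b*(1+r))/r + b = b*(1+r)" using a r0 unfolding dr cr by (simp add: field_simps)
  then have "b*(r^2 + r + 1) = 0" using r0 by (simp add: field_simps power2_eq_square) Groebner_Basis.algebra
  then have "r^2 + r + 1 = 0" using b0 by simp
  then show ?thesis using b0 dr r_def by simp
qed



lemma bwd: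
  fixes F a b r :: "'a::{finite,field}"
  assumes a: "a \<noteq> 0" and b: "b \<noteq> 0" and rr: "r^2 + r + 1 = 0" and r1: "r \<noteq> 1"
  shows "card (Ag F a b (a*r) (b*(1+r))) = 4"
proof -
  have r0: "r \<noteq> 0" using rr by auto
  have r1': "1 - r \<noteq> 0" using r1 by simp
  have rm: "1 + r \<noteq> 0"
  proof
    assume "1 + r = 0"
    then have "r = -1" by (simp add: eq_neg_iff_add_eq_0 add.commute)
    then show False using rr by simp
  qed
  have ar: "a*r \<noteq> 0" using a r0 by simp
  define wp where "wp = F - b/a"
  define ws where "ws = F - b*(1+r)/(a*r)"
  define x0 where "x0 = F + b*r/(a*(1-r))"
  have cp: "contr F (Mf F a b) = (\<lambda>x. if x = F then F else if x = wp then F + b else a*(x-F)+F+b)"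
    unfolding wp_def by (rule contr_Mf[OF a])
  have cs: "contr F (Mf F (a*r) (b*(1+r))) = (\<lambda>x. if x = F then F else if x = ws then F + b*(1+r) else a*r*(x-F)+F+b*(1+r))"
    unfolding ws_def by (rule contr_Mf[OF ar])
  have d1: "wp \<noteq> F" using a b by (simp add: wp_def)
  have d2: "ws \<noteq> F" using a b r0 rm by (simp add: ws_def)
  have d3: "wp \<noteq> ws"
  proof
    assume "wp = ws"
    then have "b/a = b*(1+r)/(a*r)" by (simp add: wp_def ws_def)
    then have "b*r = b*(1+r)" using a r0 by (simp add: field_simps)
    then show False using b by simp
  qed
  have d4: "x0 \<noteq> F" using a b r0 r1' by (simp add: x0_def)
  have d5: "x0 \<noteq> wp"
  proof
    assume "x0 = wp"
    then have "x0 - F = wp - F" by simp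
    then have "b*r/(a*(1-r)) = -(b/a)" by (simp add: wp_def x0_def)
    then have "b*r = -(b*(1-r))" using a r1' by (simp add: field_simps)
    then show False using b by (simp add: algebra_simps)
  qed
  have d6: "x0 \<noteq> ws"
  proof
    assume "x0 = ws"
    then have "x0 - F = ws - F" by simp
    then have "b*r/(a*(1-r)) = -(b*(1+r)/(a*r))" by (simp add: ws_def x0_def)
    then have "b*r*r = -(b*(1+r)*(1-r))" using a r1' r0 by (simp add: field_simps)
    then show False using b by (simp add: algebra_simps)
  qed
  have v1: "a*r*(wp-F)+F+b*(1+r) = F + b" using a by (simp add: wp_def field_simps)
  have v2: "a*(ws-F)+F+b = F + b*(1+r)"
  proof -
    have "a*(ws-F) = -(b*(1+r)/r)" using a r0 by (simp add: ws_def field_simps)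
    also have "\<dots> = b*r" using r0 rr by (simp add: field_simps power2_eq_square) Groebner_Basis.algebra
    finally show ?thesis by (simp add: algebra_simps)
  qed
  have v3: "a*(x0-F)+F+b = a*r*(x0-F)+F+b*(1+r)"
  proof -
    have "a*(x0-F)*(1-r) = b*r" using a r1' by (simp add: x0_def field_simps)
    then show ?thesis by (simp add: algebra_simps)
  qed
  have eq: "Ag F a b (a*r) (b*(1+r)) = {F, wp, ws, x0}"
  proof (intro Set.set_eqI iffI)
    fix x assume x: "x \<in> Ag F a b (a*r) (b*(1+r))"
    show "x \<in> {F, wp, ws, x0}"
    proof (cases "x \<in> {F, wp, ws}")
      case False
      then have "a*(x-F)+F+b = a*r*(x-F)+F+b*(1+r)" using x unfolding Ag_def cp cs by auto
      then have "a*(x-F)*(1-r) = b*r" by (simp add: algebra_simps)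
      then have "x - F = b*r/(a*(1-r))" using a r1' by (simp add: field_simps)
      then show ?thesis by (simp add: x0_def algebra_simps)
    qed auto
  next
    fix x assume "x \<in> {F, wp, ws, x0}"
    then show "x \<in> Ag F a b (a*r) (b*(1+r))"
      unfolding Ag_def cp cs using d1 d2 d3 d4 d5 d6 v1 v2 v3 by auto
  qed
  show ?thesis unfolding eq using d1 d2 d3 d4 d5 d6 by auto
qed



lemma omega_facts:
  fixes w :: "'a::field"
  assumes w: "w^2 + w + 1 = 0" "w \<noteq> 1"
  shows "w^3 = 1" "w \<noteq> 0" "w^2 \<noteq> 1" "(w^2)^2 + w^2 + 1 = 0" "w^2 \<noteq> 0"
proof -
  have e: "(w - 1)*(w^2+w+1) = w^3 - 1" by (simp add: algebra_simps power2_eq_square power3_eq_cube)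
  then show w3: "w^3 = 1" using w by simp
  show w0: "w \<noteq> 0" using w by auto
  show "w^2 \<noteq> 1"
  proof
    assume "w^2 = 1"
    then have "w^3 = w" by (simp add: power3_eq_cube power2_eq_square mult.assoc)
    then show False using w3 w(2) by simp
  qed
  have "(w^2)^2 = w^3 * w" by (simp add: power2_eq_square power3_eq_cube mult.assoc)
  then have "(w^2)^2 = w" using w3 by simp
  then show "(w^2)^2 + w^2 + 1 = 0" using w(1) by (simp add: algebra_simps)
  show "w^2 \<noteq> 0" using w0 by simp
qed

lemma hd_iff:
  fixes p s :: "'a::finite \<Rightarrow> 'b"
  assumes "4 \<le> CARD('a)"
  shows "hd_dist p s = CARD('a) - 4 \<longleftrightarrow> card {x. p x = s x} = 4"
proof -
  have "{x. p x \<noteq> s x} = UNIV - {x. p x = s x}" by auto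
  then have "hd_dist p s = CARD('a) - card {x. p x = s x}" unfolding hd_dist_def
    by (simp add: card_Diff_subset)
  moreover have "card {x. p x = s x} \<le> CARD('a)" by (rule card_mono) auto
  ultimately show ?thesis using assms by auto
qed

lemma adj_iff:
  fixes F a b c d w :: "'a::{finite,field}"
  assumes a: "a \<noteq> 0" and c: "c \<noteq> 0" and w: "w^2+w+1=0" "w\<noteq>1" and q4: "4 \<le> CARD('a)"
  shows "CA_adj F (Mf F a b) (Mf F c d) \<longleftrightarrow>
     b \<noteq> 0 \<and> ((c = a*w \<and> d = b*(1+w)) \<or> (c = a*w^2 \<and> d = b*(1+w^2)))" (is "_ \<longleftrightarrow> ?R")
proof -
  note wf = omega_facts[OF w]
  have "CA_adj F (Mf F a b) (Mf F c d) \<longleftrightarrow> Mf F a b \<noteq> Mf F c d \<and> card (Ag F a b c d) = 4"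
  proof -
    have h1: "hd_dist (contr F (Mf F a b)) (contr F (Mf F c d)) = CARD('a) - 4 \<longleftrightarrow> card (Ag F a b c d) = 4"
      unfolding Ag_def by (rule hd_iff[OF q4])
    show ?thesis unfolding CA_adj_def using h1 Mf_in_AGL[OF a] Mf_in_AGL[OF c] by blast
  qed
  also have "\<dots> \<longleftrightarrow> ?R"
  proof
    assume h: "Mf F a b \<noteq> Mf F c d \<and> card (Ag F a b c d) = 4"
    from fwd[OF a c] h have f: "b \<noteq> 0" "(c/a)^2 + c/a + 1 = 0" "d = b*(1+c/a)" by auto
    define r where "r = c/a"
    have cr: "c = a*r" using a r_def by simp
    have ww: "w^2 + w = -1" using w(1) by (simp add: eq_neg_iff_add_eq_0 add.assoc)
    have "(r - w)*(r - w^2) = r^2 - r*(w^2+w) + w^3"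
      by (simp add: algebra_simps power2_eq_square power3_eq_cube)
    also have "\<dots> = r^2 + r + 1" using ww wf(1) by simp
    finally have "(r - w)*(r - w^2) = r^2 + r + 1" .
    then have "r = w \<or> r = w^2" using f(2) r_def by simp
    moreover have dr: "d = b*(1+r)" using f(3) r_def by simp
    ultimately show ?R using f(1) cr by auto
  next
    assume ?R
    then obtain r where r: "r = w \<or> r = w^2" "c = a*r" "d = b*(1+r)" "b \<noteq> 0" by auto
    have rr: "r^2+r+1 = 0" and r1: "r \<noteq> 1" using r(1) w wf by auto
    have "Mf F a b \<noteq> Mf F c d" using r(2) a r1 by (simp add: Mf_eq)
    moreover have "card (Ag F a b c d) = 4" using bwd[OF a r(4) rr r1] r by simp
    ultimately show "Mf F a b \<noteq> Mf F c d \<and> card (Ag F a b c d) = 4" by simp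
  qed
  finally show ?thesis .
qed

lemma cycle_gen:
  fixes P :: "nat \<Rightarrow> 'v" and V :: "'v set"
  assumes k3: "3 \<le> k" and per: "\<And>i. P (i + k) = P i" and dist: "distinct (map P [0..<k])"
    and inV: "\<And>i. P i \<in> V"
    and nb: "\<And>i w. w \<in> V \<Longrightarrow> E (P i) w \<longleftrightarrow> w = P (Suc i) \<or> w = P (i + k - 1)"
  shows "is_cycle E (component V E (P 0)) k"
proof -
  have sh: "P (j + m*k) = P j" for j m
  proof (induction m)
    case (Suc m)
    have "P (j + Suc m * k) = P ((j + m*k) + k)" by (simp add: algebra_simps)
    then show ?case using per Suc by simp
  qed simp
  have pm: "P i = P (i mod k)" for i
    using sh[of "i mod k" "i div k"] by simp
  let ?R = "\<lambda>x y. x \<in> V \<and> y \<in> V \<and> E x y"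
  have reach: "?R\<^sup>*\<^sup>* (P 0) (P i)" for i
  proof (induction i)
    case (Suc i)
    have "?R (P i) (P (Suc i))" using nb[OF inV] inV by simp
    with Suc.IH show ?case by (rule rtranclp.rtrancl_into_rtrancl)
  qed simp
  have bk: "\<exists>i. w = P i" if wr: "?R\<^sup>*\<^sup>* (P 0) w" for w
  proof -
    from wr show ?thesis
    proof (induction rule: rtranclp_induct)
      case (step y z)
      then obtain i where "y = P i" by auto
      with step have "z = P (Suc i) \<or> z = P (i + k - 1)" using nb by auto
      then show ?case by auto
    qed auto
  qed
  define vs where "vs = map P [0..<k]"
  have k0: "0 < k" using k3 by simp
  have setvs: "set vs = range P"
  proof
    show "range P \<subseteq> set vs"
    proof
      fix x assume "x \<in> range P"
      then obtain i where "x = P i" by auto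
      then have "x = P (i mod k)" using pm by simp
      then show "x \<in> set vs" unfolding vs_def using k0 by auto
    qed
  qed (auto simp: vs_def)
  have comp: "component V E (P 0) = set vs"
    unfolding component_def setvs using reach bk inV by blast
  have nth: "vs ! i = P i" if "i < k" for i unfolding vs_def using that by simp
  have nthm: "vs ! (i mod k) = P i" for i using nth pm k0 by simp
  show ?thesis
    unfolding is_cycle_def
  proof (intro conjI exI[of _ vs])
    show "3 \<le> k" by fact
    show "distinct vs" using dist vs_def by simp
    show "length vs = k" by (simp add: vs_def)
    show "set vs = component V E (P 0)" using comp by simp
    show "\<forall>u\<in>component V E (P 0). \<forall>w\<in>component V E (P 0). E u w \<longleftrightarrow>
        (\<exists>i<k. u = vs ! i \<and> w = vs ! ((i + 1) mod k) \<or> w = vs ! i \<and> u = vs ! ((i + 1) mod k))"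
    proof (intro ballI)
      fix u w assume u: "u \<in> component V E (P 0)" and w: "w \<in> component V E (P 0)"
      then obtain i where i: "i < k" "u = P i" using comp vs_def by auto
      have wV: "w \<in> V" using w comp setvs inV by auto
      show "E u w \<longleftrightarrow>
        (\<exists>i<k. u = vs ! i \<and> w = vs ! ((i + 1) mod k) \<or> w = vs ! i \<and> u = vs ! ((i + 1) mod k))"
      proof
        assume "E u w"
        then have "w = P (Suc i) \<or> w = P (i + k - 1)" using nb[OF wV] i by simp
        then show "\<exists>i<k. u = vs ! i \<and> w = vs ! ((i + 1) mod k) \<or> w = vs ! i \<and> u = vs ! ((i + 1) mod k)"
        proof
          assume "w = P (Suc i)"
          then have "u = vs ! i \<and> w = vs ! ((i + 1) mod k)" using i nth nthm by simp
          then show ?thesis using i by blast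
        next
          assume h: "w = P (i + k - 1)"
          define j where "j = (i + k - 1) mod k"
          have "vs ! j = w" using h nthm j_def by simp
          moreover have "vs ! ((j + 1) mod k) = P (j + 1)" using nthm by simp
          moreover have "P (j + 1) = P i"
          proof -
            have "P (j + 1) = P ((j + 1) mod k)" using pm by simp
            also have "(j + 1) mod k = (i + k - 1 + 1) mod k" unfolding j_def by (simp add: mod_Suc_eq)
            also have "i + k - 1 + 1 = i + k" using k0 by simp
            finally show ?thesis using pm per by simp
          qed
          moreover have "j < k" using k0 j_def by simp
          ultimately show ?thesis using i by metis
        qed
      next
        assume "\<exists>i<k. u = vs ! i \<and> w = vs ! ((i + 1) mod k) \<or> w = vs ! i \<and> u = vs ! ((i + 1) mod k)"
        then obtain j where j: "j < k" "u = vs ! j \<and> w = vs ! ((j + 1) mod k) \<or> w = vs ! j \<and> u = vs ! ((j + 1) mod k)"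
          by blast
        show "E u w"
        proof (cases "u = vs ! j \<and> w = vs ! ((j + 1) mod k)")
          case True
          then have "u = P j" "w = P (Suc j)" using j(1) nth nthm by auto
          then show ?thesis using nb[OF wV] by simp
        next
          case False
          then have "w = P j" "u = P (Suc j)" using j nth nthm by auto
          moreover have "P (Suc j + k - 1) = P j" using per by simp
          ultimately show ?thesis using nb[OF wV, of "Suc j"] by simp
        qed
      qed
    qed
  qed
qed



lemma AGL_E:
  assumes "(p::'a::{finite,field} \<Rightarrow> 'a) \<in> AGL" shows "\<exists>a b. a \<noteq> 0 \<and> p = Mf F a b"
proof -
  from assms obtain a b where p: "p = (\<lambda>x. a*x+b)" "a \<noteq> 0" unfolding AGL_def by auto
  have "p = Mf F a (a*F+b-F)" unfolding p Mf_def by (auto simp: algebra_simps)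
  then show ?thesis using p(2) by blast
qed

lemma nb_lemma:
  fixes F a b c d w :: "'a::{finite,field}"
  assumes a: "a \<noteq> 0" and b: "b \<noteq> 0" and c: "c \<noteq> 0" and w: "w^2+w+1=0" "w\<noteq>1" and q4: "4 \<le> CARD('a)"
  shows "CA_adj F (Mf F a b) (Mf F c d) \<longleftrightarrow>
     Mf F c d = Mf F (a*w) (b*(1+w)) \<or> Mf F c d = Mf F (a*w^2) (b*(1+w^2))"
  using adj_iff[OF a c w q4, of F b d] b by (simp add: Mf_eq)

lemma cyc_main:
  fixes F a b w :: "'a::{finite,field}"
  assumes a: "a \<noteq> 0" and b: "b \<noteq> 0" and w: "w^2+w+1=0" "w\<noteq>1" and q4: "4 \<le> CARD('a)"
    and k3: "3 \<le> k"
    and per1: "w^k = 1" "(1+w)^k = 1"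
    and last: "w^(k-1) = w^2" "(1+w)^(k-1) = 1+w^2"
    and nonper: "\<And>m. 0 < m \<Longrightarrow> m < k \<Longrightarrow> w^m = 1 \<Longrightarrow> (1+w)^m = 1 \<Longrightarrow> False"
  shows "is_cycle (CA_adj F) (component AGL (CA_adj F) (Mf F a b)) k"
proof -
  note wf = omega_facts[OF w]
  define v where "v = 1 + w"
  have v0: "v \<noteq> 0"
  proof
    assume "v = 0"
    then have "(1+w)^k = 0" using k3 v_def by simp
    then show False using per1 by simp
  qed
  have w0: "w \<noteq> 0" by (rule wf(2))
  define P where "P i = Mf F (a*w^i) (b*v^i)" for i
  have P0: "P 0 = Mf F a b" by (simp add: P_def)
  have inV: "P i \<in> AGL" for i using a w0 by (simp add: P_def Mf_in_AGL)
  have per: "P (i + k) = P i" for i using per1 by (simp add: P_def power_add v_def)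
  have nb: "CA_adj F (P i) x \<longleftrightarrow> x = P (Suc i) \<or> x = P (i + k - 1)" if x: "x \<in> AGL" for i x
  proof -
    obtain c d where cd: "x = Mf F c d" "c \<noteq> 0" using AGL_E[OF x, of F] by auto
    have "CA_adj F (P i) x \<longleftrightarrow>
      x = Mf F (a*w^i*w) (b*v^i*(1+w)) \<or> x = Mf F (a*w^i*w^2) (b*v^i*(1+w^2))"
      unfolding P_def cd(1) by (rule nb_lemma) (use a b w0 v0 cd w q4 in auto)
    moreover have "P (Suc i) = Mf F (a*w^i*w) (b*v^i*(1+w))" by (simp add: P_def v_def ac_simps)
    moreover have "P (i + k - 1) = Mf F (a*w^i*w^2) (b*v^i*(1+w^2))"
    proof -
      have "i + k - 1 = i + (k - 1)" using k3 by simp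
      then show ?thesis using last by (simp add: P_def power_add v_def mult.assoc)
    qed
    ultimately show ?thesis by simp
  qed
  have dist: "distinct (map P [0..<k])"
    unfolding distinct_conv_nth
  proof (intro allI impI)
    fix i j assume i: "i < length (map P [0..<k])" and j: "j < length (map P [0..<k])" and ij: "i \<noteq> j"
    have ik: "i < k" and jk: "j < k" using i j by auto
    have gen: "P i \<noteq> P j" if "i < j" "j < k" for i j
    proof
      assume "P i = P j"
      then have e: "a*w^i = a*w^j" "b*v^i = b*v^j" by (auto simp: P_def Mf_eq)
      define m where "m = j - i"
      have jm: "j = i + m" using that m_def by simp
      have "w^i = w^i * w^m" using e(1) a jm by (simp add: power_add)
      then have wm: "w^m = 1" using w0 by simp
      have "v^i = v^i * v^m" using e(2) b jm by (simp add: power_add)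
      then have vm: "v^m = 1" using v0 by simp
      have m0: "0 < m" and mk: "m < k" using that m_def by auto
      show False using nonper[OF m0 mk wm] vm v_def by simp
    qed
    show "map P [0..<k] ! i \<noteq> map P [0..<k] ! j"
      using ik jk ij gen[of i j] gen[of j i] by (cases "i < j") auto
  qed
  have "is_cycle (CA_adj F) (component AGL (CA_adj F) (P 0)) k"
    by (rule cycle_gen[OF k3 per dist inV nb])
  then show ?thesis using P0 by simp
qed

theorem theorem6:
  fixes F :: "'a::{finite,field}"
  assumes "CARD('a) mod 3 = 1"
  shows "{p \<in> AGL. isolated (CA_adj F) p} = {p \<in> AGL. p F = F}
       \<and> card {p \<in> (AGL :: ('a \<Rightarrow> 'a) set). isolated (CA_adj F) p} = CARD('a) - 1
       \<and> (odd CARD('a) \<longrightarrow> (\<forall>p\<in>AGL. \<not> isolated (CA_adj F) p \<longrightarrow>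
             is_cycle (CA_adj F) (component AGL (CA_adj F) p) 6))
       \<and> (even CARD('a) \<longrightarrow> (\<forall>p\<in>AGL. \<not> isolated (CA_adj F) p \<longrightarrow>
             is_cycle (CA_adj F) (component AGL (CA_adj F) p) 3))"
proof -
  have q2: "2 \<le> CARD('a)"
  proof -
    have "card {0, 1::'a} \<le> CARD('a)" by (rule card_mono) auto
    then show ?thesis by simp
  qed
  have q4: "4 \<le> CARD('a)" using q2 assms by presburger
  obtain w :: 'a where w: "w^2+w+1 = 0" "w \<noteq> 1" using exists_omega[OF assms] by auto
  note wf = omega_facts[OF w]
  have AGLe: "\<exists>a b. a \<noteq> 0 \<and> p = Mf F a b" if "p \<in> AGL" for p
    using AGL_E[OF that] by blast
  have iso: "isolated (CA_adj F) (Mf F a b) \<longleftrightarrow> b = 0" if a: "a \<noteq> 0" for a b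
  proof
    assume h: "isolated (CA_adj F) (Mf F a b)"
    show "b = 0"
    proof (rule ccontr)
      assume b: "b \<noteq> 0"
      have "a*w \<noteq> 0" using a wf(2) by simp
      then have "CA_adj F (Mf F a b) (Mf F (a*w) (b*(1+w)))" using adj_iff[OF a _ w q4] b by simp
      then show False using h unfolding isolated_def by blast
    qed
  next
    assume b0: "b = 0"
    show "isolated (CA_adj F) (Mf F a b)"
      unfolding isolated_def
    proof
      assume "\<exists>s. CA_adj F (Mf F a b) s"
      then obtain s where s: "CA_adj F (Mf F a b) s" by blast
      then have "s \<in> AGL" unfolding CA_adj_def by simp
      then obtain c d where cd: "c \<noteq> 0" "s = Mf F c d" using AGLe by blast
      show False using s adj_iff[OF a cd(1) w q4, of F b d] b0 cd(2) by simp
    qed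
  qed
  have MfF: "Mf F a b F = F + b" for a b by (simp add: Mf_def)
  have part1: "{p \<in> AGL. isolated (CA_adj F) p} = {p \<in> AGL. p F = F}"
  proof -
    have "p \<in> AGL \<and> isolated (CA_adj F) p \<longleftrightarrow> p \<in> AGL \<and> p F = F" for p :: "'a \<Rightarrow> 'a"
    proof (cases "p \<in> AGL")
      case True
      then obtain a b where ab: "a \<noteq> 0" "p = Mf F a b" using AGLe by blast
      have "isolated (CA_adj F) p \<longleftrightarrow> p F = F" using iso[OF ab(1)] ab(2) MfF by simp
      then show ?thesis using True by simp
    qed simp
    then show ?thesis by blast
  qed
  have part2: "card {p \<in> (AGL :: ('a \<Rightarrow> 'a) set). p F = F} = CARD('a) - 1"
  proof -
    have "{p \<in> (AGL :: ('a \<Rightarrow> 'a) set). p F = F} = (\<lambda>a. Mf F a 0) ` (UNIV - {0})"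
    proof (intro Set.set_eqI iffI)
      fix p assume "p \<in> {p \<in> (AGL :: ('a \<Rightarrow> 'a) set). p F = F}"
      then obtain a b where "a \<noteq> 0" "p = Mf F a b" "p F = F" using AGLe by blast
      then show "p \<in> (\<lambda>a. Mf F a 0) ` (UNIV - {0})" using MfF by auto
    next
      fix p assume "p \<in> (\<lambda>a. Mf F a 0) ` (UNIV - {0::'a})"
      then show "p \<in> {p \<in> AGL. p F = F}" using MfF Mf_in_AGL by auto
    qed
    moreover have "inj_on (\<lambda>a. Mf F a (0::'a)) (UNIV - {0})" by (rule inj_onI) (simp add: Mf_eq)
    ultimately have "card {p \<in> (AGL :: ('a \<Rightarrow> 'a) set). p F = F} = card (UNIV - {0::'a})"
      by (simp add: card_image)
    also have "\<dots> = CARD('a) - 1" by (simp add: card_Diff_singleton)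
    finally show ?thesis .
  qed
  define v where "v = 1 + w"
  have ww: "w^2 + w = -1" using w(1) by (simp add: eq_neg_iff_add_eq_0 add.assoc)
  have v2: "v^2 = w"
  proof -
    have "v^2 = (w^2 + w) + w + 1" by (simp add: v_def power2_eq_square algebra_simps)
    then show ?thesis using ww by simp
  qed
  have v3: "v^3 = -1"
  proof -
    have "v^3 = v^2 * v" by (simp add: power2_eq_square power3_eq_cube)
    also have "\<dots> = w^2 + w" using v2 by (simp add: v_def power2_eq_square algebra_simps)
    finally show ?thesis using ww by simp
  qed
  have w4: "w^4 = w" using power_add[of w 3 1] wf(1) by simp
  have w5: "w^5 = w^2" using power_add[of w 3 2] wf(1) by simp
  have w6: "w^6 = 1" using power_add[of w 3 3] wf(1) by simp
  have e1w: "1 + w^2 = - w"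
  proof -
    have "1 + w^2 = (w^2+w+1) - w" by (simp add: algebra_simps)
    then show ?thesis using w(1) by simp
  qed
  have v5: "v^5 = 1 + w^2"
  proof -
    have "v^5 = v^3 * v^2" using power_add[of v 3 2] by simp
    also have "\<dots> = - w" using v3 v2 by simp
    also have "\<dots> = 1 + w^2" using e1w by simp
    finally show ?thesis .
  qed
  have v6: "v^6 = 1" using power_add[of v 3 3] v3 by simp
  have part3: "odd CARD('a) \<longrightarrow> (\<forall>p\<in>AGL. \<not> isolated (CA_adj F) p \<longrightarrow>
             is_cycle (CA_adj F) (component AGL (CA_adj F) p) 6)"
  proof (intro impI ballI)
    fix p assume odd: "odd CARD('a)" and p: "p \<in> AGL" and ni: "\<not> isolated (CA_adj F) p"
    obtain a b where ab: "a \<noteq> 0" "p = Mf F a b" using AGLe p by blast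
    have b: "b \<noteq> 0" using ni iso ab by simp
    have two: "(2::'a) \<noteq> 0" by (rule odd_char[OF odd])
    have m1: "(-1::'a) \<noteq> 1"
    proof
      assume "(-1::'a) = 1"
      then have "(1::'a) + 1 = 0" by (metis add.right_inverse)
      then show False using two by (simp add: one_add_one)
    qed
    have "is_cycle (CA_adj F) (component AGL (CA_adj F) (Mf F a b)) 6"
    proof (rule cyc_main[OF ab(1) b w q4])
      show "w^6 = 1" "(1+w)^6 = 1" using w6 v6 v_def by auto
      show "w^(6-1) = w^2" "(1+w)^(6-1) = 1+w^2" using w5 v5 v_def by auto
      fix m :: nat assume m: "0 < m" "m < 6" "w^m = 1" "(1+w)^m = 1"
      then have "m = 1 \<or> m = 2 \<or> m = 3 \<or> m = 4 \<or> m = 5" by auto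
      then show False using m w wf w4 w5 v3 m1 v_def by auto
    qed simp
    then show "is_cycle (CA_adj F) (component AGL (CA_adj F) p) 6" using ab by simp
  qed
  have part4: "even CARD('a) \<longrightarrow> (\<forall>p\<in>AGL. \<not> isolated (CA_adj F) p \<longrightarrow>
             is_cycle (CA_adj F) (component AGL (CA_adj F) p) 3)"
  proof (intro impI ballI)
    fix p assume ev: "even CARD('a)" and p: "p \<in> AGL" and ni: "\<not> isolated (CA_adj F) p"
    obtain a b where ab: "a \<noteq> 0" "p = Mf F a b" using AGLe p by blast
    have b: "b \<noteq> 0" using ni iso ab by simp
    have two: "(2::'a) = 0" by (rule even_char2[OF ev])
    have m1: "(-1::'a) = 1"
    proof -
      have "(1::'a) + 1 = 0" using two by (simp add: one_add_one)
      then show ?thesis by (metis add_eq_0_iff)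
    qed
    have wneg: "- w = w"
    proof -
      have "w + w = 0" using two by (metis mult_2 mult_zero_left)
      then show ?thesis by (metis add_eq_0_iff)
    qed
    have "is_cycle (CA_adj F) (component AGL (CA_adj F) (Mf F a b)) 3"
    proof (rule cyc_main[OF ab(1) b w q4])
      show "w^3 = 1" "(1+w)^3 = 1" using wf(1) v3 m1 v_def by auto
      from e1w show "w^(3-1) = w^2" "(1+w)^(3-1) = 1+w^2" using v2 v_def wneg by auto
      fix m :: nat assume m: "0 < m" "m < 3" "w^m = 1" "(1+w)^m = 1"
      then have "m = 1 \<or> m = 2" by auto
      then show False using m w wf by auto
    qed simp
    then show "is_cycle (CA_adj F) (component AGL (CA_adj F) p) 3" using ab by simp
  qed
  show ?thesis using part1 part2 part3 part4 by simp
qed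

end
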